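(* Let $z_1,z_2,\dots$ be i.i.d. standard normal random variables, let $I_1,I_2$ be positive integers, and set $N_1=I_1$, $N_2=I_1+I_2$. Let $r_1,r_2>0$ and define the events $\zeta_1=\{\sum_{j=1}^{N_1} z_j^2>r_1^2\}$ and $\zeta_2=\{\sum_{j=1}^{N_2} z_j^2>r_2^2\}$. Then $$\Pr(\zeta_1\cap\zeta_2)\le \inf_{0\le u<1/2}\frac{e^{-u r_2^2}\,\Pr\left(\chi^2_{I_1}>(1-2u)r_1^2\right)}{(1-2u)^{N_2/2}},$$ and $$\Pr(\zeta_1\cap\zeta_2)\ge \max\left(\Pr(\zeta_1)-w_1,\ \Pr(\zeta_2)-w_2\right),$$ where $$w_1=\inf_{v\ge 0}\frac{e^{v r_2^2}\,\Pr\left(\chi^2_{I_1}>(1+2v)r_1^2\right)}{(1+2v)^{N_2/2}},\qquad w_2=\inf_{0\le v<1/2}\frac{e^{-v r_2^2}\,\Pr\left(\chi^2_{I_1}\le(1-2v)r_1^2\right)}{(1-2v)^{N_2/2}}.$$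
   Context: For a positive integer $k$, $\chi^2_k$ denotes a random variable with the central chi-square distribution with $k$ degrees of freedom; thus $\Pr(\zeta_i)=\Pr(\chi^2_{N_i}>r_i^2)$. *)

theory Defs
  imports "HOL-Probability.Probability"
begin

definition chi2_density :: "nat \<Rightarrow> real \<Rightarrow> real" where
  "chi2_density k x =
     (if x > 0 then x powr (real k / 2 - 1) * exp (- x / 2) / (2 powr (real k / 2) * Gamma (real k / 2))
      else 0)"

definition chi2_distr :: "nat \<Rightarrow> real measure" where
  "chi2_distr k = density lborel (\<lambda>x. ennreal (chi2_density k x))"

definition chi2_gt :: "nat \<Rightarrow> real \<Rightarrow> real" where
  "chi2_gt k t = measure (chi2_distr k) {t<..}"

definition chi2_le :: "nat \<Rightarrow> real \<Rightarrow> real" where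
  "chi2_le k t = measure (chi2_distr k) {..t}"

end

theory Submission
  imports Defs
begin

definition gd :: "real \<Rightarrow> real \<Rightarrow> real" where
  "gd a x = (if x > 0 then x powr (a - 1) * exp (- x / 2) / (2 powr a * Gamma a) else 0)"

lemma chi2_density_gd: "chi2_density k = gd (real k / 2)"
  by (simp add: fun_eq_iff chi2_density_def gd_def)

lemma gd_nonneg: "a > 0 \<Longrightarrow> gd a x \<ge> 0"
  by (auto simp: gd_def Gamma_real_pos intro!: divide_nonneg_pos)

lemma gd_measurable[measurable]: "gd a \<in> borel_measurable borel"
  unfolding gd_def by measurable

lemma gd_integral:
  assumes a: "a > 0"
  shows "(\<integral>\<^sup>+x. ennreal (gd a x) \<partial>lborel) = 1"
proof -
  have G: "Gamma a > 0" using a by (rule Gamma_real_pos)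
  have "(\<integral>\<^sup>+x. ennreal (gd a x) \<partial>lborel) = ennreal \<bar>2\<bar> * (\<integral>\<^sup>+x. ennreal (gd a (0 + 2 * x)) \<partial>lborel)"
    by (rule nn_integral_real_affine) auto
  also have "(\<lambda>x. ennreal (gd a (0 + 2 * x))) = (\<lambda>x. ennreal (1 / (2 * Gamma a)) * ennreal (indicator {0..} x * x powr (a - 1) / exp x))"
  proof
    fix x :: real
    show "ennreal (gd a (0 + 2 * x)) = ennreal (1 / (2 * Gamma a)) * ennreal (indicator {0..} x * x powr (a - 1) / exp x)"
    proof (cases "x > 0")
      case True
      have "gd a (2 * x) = 2 powr (a - 1) * x powr (a - 1) * exp (- x) / (2 powr a * Gamma a)"
        using True by (simp add: gd_def powr_mult)
      also have "\<dots> = (1 / (2 * Gamma a)) * (x powr (a - 1) / exp x)"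
        using G by (simp add: powr_diff field_simps exp_minus)
      finally show ?thesis using True G by (simp add: ennreal_mult'[symmetric])
    next
      case False
      then show ?thesis by (auto simp: gd_def indicator_def)
    qed
  qed
  also have "(\<integral>\<^sup>+x. ennreal (1 / (2 * Gamma a)) * ennreal (indicator {0..} x * x powr (a - 1) / exp x) \<partial>lborel)
      = ennreal (1 / (2 * Gamma a)) * ennreal (Gamma a)"
    by (subst nn_integral_cmult) (auto simp: Gamma_conv_nn_integral_real[OF a])
  also have "ennreal (1 / (2 * Gamma a)) * ennreal (Gamma a) = ennreal (1/2)"
    by (subst ennreal_mult[symmetric]) (use G in auto)
  also have "ennreal \<bar>2\<bar> * ennreal (1/2) = ennreal (2 * (1/2))"
    by (subst ennreal_mult[symmetric]) auto
  also have "\<dots> = 1" by simp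
  finally show ?thesis .
qed

lemma gd_scale_pt:
  assumes a: "a > 0" and s: "s > 0"
  shows "s powr (-a) * s * gd a (s * x) = exp ((1 - s) * x / 2) * gd a x"
proof (cases "x > 0")
  case True
  have "s powr (-a) * s * gd a (s * x) = (s powr (-a) * s * s powr (a - 1)) * (x powr (a - 1) * exp (- (s * x) / 2) / (2 powr a * Gamma a))"
    using True s by (simp add: gd_def powr_mult)
  also have "s powr (-a) * s * s powr (a - 1) = 1"
    using s by (simp add: powr_add[symmetric] powr_minus powr_diff field_simps)
  also have "exp (- (s * x) / 2) = exp ((1 - s) * x / 2) * exp (- x / 2)"
    by (simp add: exp_add[symmetric] field_simps)
  finally show ?thesis using True by (simp add: gd_def)
next
  case False
  then show ?thesis using s by (simp add: gd_def zero_less_mult_iff)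
qed

lemma gd_scale:
  assumes a: "a > 0" and s: "s > 0" and h[measurable]: "h \<in> borel_measurable borel"
  shows "(\<integral>\<^sup>+x. ennreal (exp ((1 - s) * x / 2) * gd a x) * h (s * x) \<partial>lborel)
       = ennreal (s powr (-a)) * (\<integral>\<^sup>+y. ennreal (gd a y) * h y \<partial>lborel)"
proof -
  have "(\<integral>\<^sup>+y. ennreal (gd a y) * h y \<partial>lborel) = ennreal \<bar>s\<bar> * (\<integral>\<^sup>+x. ennreal (gd a (0 + s * x)) * h (0 + s * x) \<partial>lborel)"
    using s by (intro nn_integral_real_affine) auto
  then have "ennreal (s powr (-a)) * (\<integral>\<^sup>+y. ennreal (gd a y) * h y \<partial>lborel)
      = ennreal (s powr (-a)) * (ennreal s * (\<integral>\<^sup>+x. ennreal (gd a (s * x)) * h (s * x) \<partial>lborel))"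
    using s by simp
  also have "\<dots> = (\<integral>\<^sup>+x. ennreal (s powr (-a)) * (ennreal s * (ennreal (gd a (s * x)) * h (s * x))) \<partial>lborel)"
    by (simp add: nn_integral_cmult)
  also have "\<dots> = (\<integral>\<^sup>+x. ennreal (exp ((1 - s) * x / 2) * gd a x) * h (s * x) \<partial>lborel)"
  proof (intro nn_integral_cong)
    fix x
    have "ennreal (s powr (-a)) * (ennreal s * (ennreal (gd a (s * x)) * h (s * x)))
        = ennreal (s powr (-a) * s * gd a (s * x)) * h (s * x)"
      using s gd_nonneg[OF a] by (simp add: ennreal_mult mult.assoc)
    also have "\<dots> = ennreal (exp ((1 - s) * x / 2) * gd a x) * h (s * x)"
      using gd_scale_pt[OF a s] by simp
    finally show "ennreal (s powr (-a)) * (ennreal s * (ennreal (gd a (s * x)) * h (s * x))) = ennreal (exp ((1 - s) * x / 2) * gd a x) * h (s * x)" .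
  qed
  finally show ?thesis by simp
qed

lemma gd_conv_pt:
  assumes a: "a > 0" and b: "b > 0" and x: "x > 0"
  shows "gd a (x - x * t) * gd b (x * t)
       = (x powr (a + b - 2) * exp (- x / 2) / (2 powr a * Gamma a * (2 powr b * Gamma b)))
         * (indicator {0..1} t * (t powr (b - 1) * (1 - t) powr (a - 1)))"
proof (cases "0 < t \<and> t < 1")
  case True
  have e: "exp (- (x - x * t) / 2) * exp (- (x * t) / 2) = exp (- x / 2)"
    by (simp add: exp_add[symmetric] field_simps)
  have p: "(x - x * t) powr (a - 1) = x powr (a - 1) * (1 - t) powr (a - 1)"
    using True x by (simp add: powr_mult[symmetric] algebra_simps)
  have q: "(x * t) powr (b - 1) = x powr (b - 1) * t powr (b - 1)"
    using True x by (simp add: powr_mult)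
  have r: "x powr (a - 1) * x powr (b - 1) = x powr (a + b - 2)"
    by (simp add: powr_add[symmetric])
  have pos1: "x - x * t > 0" using True x by (simp add: algebra_simps)
  have pos2: "x * t > 0" using True x by simp
  have g1: "gd a (x - x * t) = x powr (a - 1) * (1 - t) powr (a - 1) * exp (- (x - x * t) / 2) / (2 powr a * Gamma a)"
    by (simp only: gd_def if_P[OF pos1] p)
  have g2: "gd b (x * t) = x powr (b - 1) * t powr (b - 1) * exp (- (x * t) / 2) / (2 powr b * Gamma b)"
    by (simp only: gd_def if_P[OF pos2] q)
  have "gd a (x - x * t) * gd b (x * t) =
      (x powr (a - 1) * x powr (b - 1)) * (exp (- (x - x * t) / 2) * exp (- (x * t) / 2))
       / (2 powr a * Gamma a * (2 powr b * Gamma b)) * (t powr (b - 1) * (1 - t) powr (a - 1))"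
    unfolding g1 g2 by (simp add: field_simps)
  also have "\<dots> = (x powr (a + b - 2) * exp (- x / 2) / (2 powr a * Gamma a * (2 powr b * Gamma b)))
         * (t powr (b - 1) * (1 - t) powr (a - 1))" by (simp only: e r)
  finally show ?thesis using True by simp
next
  case False
  then have "t \<le> 0 \<or> t \<ge> 1" by auto
  then show ?thesis
  proof
    assume "t \<le> 0" then show ?thesis using x
      by (cases "t = 0") (auto simp: gd_def indicator_def mult_nonneg_nonpos not_less zero_less_mult_iff)
  next
    assume "t \<ge> 1" then show ?thesis using x
      by (cases "t = 1") (auto simp: gd_def indicator_def not_less mult_le_cancel_left1)
  qed
qed

lemma gd_conv:
  assumes a: "a > 0" and b: "b > 0"
  shows "(\<lambda>x. \<integral>\<^sup>+y. ennreal (gd a (x - y)) * ennreal (gd b y) \<partial>lborel) = (\<lambda>x. ennreal (gd (a + b) x))"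
proof
  fix x :: real
  show "(\<integral>\<^sup>+y. ennreal (gd a (x - y)) * ennreal (gd b y) \<partial>lborel) = ennreal (gd (a + b) x)"
  proof (cases "x > 0")
    case False
    have "(\<integral>\<^sup>+y. ennreal (gd a (x - y)) * ennreal (gd b y) \<partial>lborel) = (\<integral>\<^sup>+(y::real). 0 \<partial>lborel)"
    proof (rule nn_integral_cong)
      fix y :: real
      show "ennreal (gd a (x - y)) * ennreal (gd b y) = 0"
        using False by (cases "y > 0") (auto simp: gd_def)
    qed
    then show ?thesis using False by (simp add: gd_def)
  next
    case x: True
    define K where "K = x powr (a + b - 2) * exp (- x / 2) / (2 powr a * Gamma a * (2 powr b * Gamma b))"
    have K: "K \<ge> 0" using a b unfolding K_def by (auto intro!: divide_nonneg_pos mult_pos_pos Gamma_real_pos)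
    have "(\<integral>\<^sup>+y. ennreal (gd a (x - y)) * ennreal (gd b y) \<partial>lborel)
        = ennreal \<bar>x\<bar> * (\<integral>\<^sup>+t. ennreal (gd a (x - (0 + x * t))) * ennreal (gd b (0 + x * t)) \<partial>lborel)"
      using x by (intro nn_integral_real_affine) auto
    also have "(\<integral>\<^sup>+t. ennreal (gd a (x - (0 + x * t))) * ennreal (gd b (0 + x * t)) \<partial>lborel)
        = (\<integral>\<^sup>+t. ennreal K * ennreal (indicator {0..1} t * (t powr (b - 1) * (1 - t) powr (a - 1))) \<partial>lborel)"
      using gd_conv_pt[OF a b x] gd_nonneg a b K
      by (intro nn_integral_cong) (simp add: ennreal_mult[symmetric] K_def)
    also have "\<dots> = ennreal K * ennreal (Beta b a)"
      using nn_integral_has_integral_lebesgue[OF _ has_integral_Beta_real[OF b a]]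
      by (subst nn_integral_cmult) auto
    also have "ennreal \<bar>x\<bar> * (ennreal K * ennreal (Beta b a)) = ennreal (x * K * Beta b a)"
    proof -
      have B: "Beta b a \<ge> 0" using a b by (simp add: Beta_def Gamma_real_pos less_imp_le)
      show ?thesis using x K B by (simp add: ennreal_mult mult.assoc)
    qed
    also have "x * K * Beta b a = gd (a + b) x"
    proof -
      have Ga: "Gamma a > 0" "Gamma b > 0" "Gamma (a + b) > 0" using a b by (auto intro!: Gamma_real_pos)
      have "x * x powr (a + b - 2) = x powr (a + b - 1)"
      proof -
        have "x powr (a + b - 1) = x powr ((a + b - 2) + 1)" by simp
        also have "\<dots> = x powr (a + b - 2) * x powr 1" by (rule powr_add)
        finally show ?thesis using x by simp
      qed
      moreover have "2 powr a * 2 powr b = (2::real) powr (a + b)" by (simp add: powr_add)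
      ultimately show ?thesis using x Ga unfolding K_def Beta_def gd_def
        by (simp add: field_simps)
    qed
    finally show ?thesis .
  qed
qed

lemma gd_half_sq:
  assumes x: "x > 0"
  shows "gd (1/2) (x\<^sup>2) * (2 * x) = 2 * std_normal_density x"
proof -
  have "(x\<^sup>2) powr (1/2 - 1) = 1 / x"
    using x by (simp add: powr_minus_divide powr_half_sqrt powr_power[symmetric] flip: powr_powr)
  moreover have "(2::real) powr (1/2) = sqrt 2" by (simp add: powr_half_sqrt)
  ultimately show ?thesis using x
    by (simp add: gd_def std_normal_density_def Gamma_one_half_real real_sqrt_mult field_simps)
qed

lemma std_normal_density_minus: "std_normal_density (- x) = std_normal_density x"
  by (simp add: std_normal_density_def)

lemma sq_normal_cdf:
  "(\<integral>\<^sup>+x. ennreal (std_normal_density x) * indicator {x. x\<^sup>2 \<le> a} x \<partial>lborel)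
     = (\<integral>\<^sup>+y. ennreal (gd (1/2) y) * indicator {..a} y \<partial>lborel)"
proof (cases "a > 0")
  case False
  have "(\<integral>\<^sup>+x. ennreal (std_normal_density x) * indicator {x. x\<^sup>2 \<le> a} x \<partial>lborel) = 0"
  proof (rule nn_integral_zero', rule AE_mp[OF AE_lborel_singleton[of 0]], rule AE_I2, rule impI)
    fix x :: real assume "x \<noteq> 0"
    then have "x\<^sup>2 > 0" by simp
    then have "\<not> x\<^sup>2 \<le> a" using False by linarith
    then show "ennreal (std_normal_density x) * indicator {x. x\<^sup>2 \<le> a} x = 0"
      by (simp add: indicator_def)
  qed
  also have "0 = (\<integral>\<^sup>+y. ennreal (gd (1/2) y) * indicator {..a} y \<partial>lborel)"
    by (rule nn_integral_zero'[symmetric], rule AE_I2) (use False in \<open>auto simp: gd_def indicator_def\<close>)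
  finally show ?thesis .
next
  case True
  define r where "r = sqrt a"
  have r: "r > 0" "r\<^sup>2 = a" using True by (auto simp: r_def)
  have "(\<integral>\<^sup>+y. ennreal (gd (1/2) y) * indicator {..a} y \<partial>lborel)
      = (\<integral>\<^sup>+y. ennreal (gd (1/2) y) * indicator {(0::real)\<^sup>2..r\<^sup>2} y \<partial>lborel)"
    by (rule nn_integral_cong) (auto simp: indicator_def gd_def r)
  also have "\<dots> = (\<integral>\<^sup>+x. ennreal (gd (1/2) (x\<^sup>2)) * (2 * x) * indicator {0..r} x \<partial>lborel)"
    by (rule nn_integral_substitution_aux[where g = "\<lambda>x. x\<^sup>2" and g' = "\<lambda>x. 2 * x"])
       (auto intro!: derivative_eq_intros continuous_intros simp: r)
  also have "\<dots> = (\<integral>\<^sup>+x. ennreal (2 * std_normal_density x) * indicator {0..r} x \<partial>lborel)"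
  proof (rule nn_integral_cong_AE, rule AE_mp[OF AE_lborel_singleton[of 0]], rule AE_I2, rule impI)
    fix x :: real assume "x \<noteq> 0"
    show "ennreal (gd (1/2) (x\<^sup>2)) * ennreal (2 * x) * indicator {0..r} x = ennreal (2 * std_normal_density x) * indicator {0..r} x"
    proof (cases "x > 0")
      case True
      have e: "ennreal (gd (1/2) (x\<^sup>2)) * ennreal (2 * x) = ennreal (gd (1/2) (x\<^sup>2) * (2 * x))"
        using True gd_nonneg[of "1/2" "x\<^sup>2"] by (simp add: ennreal_mult)
      show ?thesis by (simp only: e gd_half_sq[OF True])
    next
      case False
      then show ?thesis using \<open>x \<noteq> 0\<close> by (auto simp: indicator_def)
    qed
  qed
  finally have R: "(\<integral>\<^sup>+y. ennreal (gd (1/2) y) * indicator {..a} y \<partial>lborel) = 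
     (\<integral>\<^sup>+x. ennreal (2 * std_normal_density x) * indicator {0..r} x \<partial>lborel)" .

  have "(\<integral>\<^sup>+x. ennreal (std_normal_density x) * indicator {x. x\<^sup>2 \<le> a} x \<partial>lborel)
      = (\<integral>\<^sup>+x. ennreal (std_normal_density x) * indicator {0..r} x + ennreal (std_normal_density x) * indicator {-r..<0} x \<partial>lborel)"
  proof (rule nn_integral_cong)
    fix x :: real
    have "x\<^sup>2 \<le> a \<longleftrightarrow> \<bar>x\<bar> \<le> \<bar>r\<bar>"
      unfolding r(2)[symmetric] by (rule abs_le_square_iff[symmetric])
    also have "\<dots> \<longleftrightarrow> -r \<le> x \<and> x \<le> r" using r by (auto simp add: abs_le_iff)
    finally have "x\<^sup>2 \<le> a \<longleftrightarrow> -r \<le> x \<and> x \<le> r" .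
    then show "ennreal (std_normal_density x) * indicator {x. x\<^sup>2 \<le> a} x = ennreal (std_normal_density x) * indicator {0..r} x + ennreal (std_normal_density x) * indicator {-r..<0} x"
      by (auto simp: indicator_def)
  qed
  also have "\<dots> = (\<integral>\<^sup>+x. ennreal (std_normal_density x) * indicator {0..r} x \<partial>lborel) + (\<integral>\<^sup>+x. ennreal (std_normal_density x) * indicator {-r..<0} x \<partial>lborel)"
    by (rule nn_integral_add) auto
  also have "(\<integral>\<^sup>+x. ennreal (std_normal_density x) * indicator {-r..<0} x \<partial>lborel)
     = ennreal \<bar>-1\<bar> * (\<integral>\<^sup>+x. ennreal (std_normal_density (0 + -1 * x)) * indicator {-r..<0} (0 + -1 * x) \<partial>lborel)"
    by (rule nn_integral_real_affine) auto
  also have "\<dots> = (\<integral>\<^sup>+x. ennreal (std_normal_density x) * indicator {0..r} x \<partial>lborel)"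
  proof -
    have "(\<integral>\<^sup>+x. ennreal (std_normal_density (0 + -1 * x)) * indicator {-r..<0} (0 + -1 * x) \<partial>lborel)
       = (\<integral>\<^sup>+x. ennreal (std_normal_density x) * indicator {0..r} x \<partial>lborel)"
    proof (rule nn_integral_cong_AE, rule AE_mp[OF AE_lborel_singleton[of 0]], rule AE_I2, rule impI)
      fix x :: real assume x0: "x \<noteq> 0"
      have "(0 + -1 * x \<in> {-r..<0}) = (x \<in> {0..r})" using x0 by auto
      then show "ennreal (std_normal_density (0 + -1 * x)) * indicator {-r..<0} (0 + -1 * x) = ennreal (std_normal_density x) * indicator {0..r} x"
        by (simp only: indicator_def) (simp add: std_normal_density_minus)
    qed
    then show ?thesis by simp
  qed

  also have "(\<integral>\<^sup>+x. ennreal (std_normal_density x) * indicator {0..r} x \<partial>lborel) + (\<integral>\<^sup>+x. ennreal (std_normal_density x) * indicator {0..r} x \<partial>lborel)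
     = (\<integral>\<^sup>+x. ennreal (std_normal_density x) * indicator {0..r} x + ennreal (std_normal_density x) * indicator {0..r} x \<partial>lborel)"
    by (rule nn_integral_add[symmetric]) auto
  also have "\<dots> = (\<integral>\<^sup>+x. ennreal (2 * std_normal_density x) * indicator {0..r} x \<partial>lborel)"
  proof (rule nn_integral_cong)
    fix x :: real
    have "ennreal (2 * std_normal_density x) = ennreal (std_normal_density x) + ennreal (std_normal_density x)"
      by (simp only: mult_2 ennreal_plus[OF normal_density_nonneg normal_density_nonneg])
    then show "ennreal (std_normal_density x) * indicator {0..r} x + ennreal (std_normal_density x) * indicator {0..r} x = ennreal (2 * std_normal_density x) * indicator {0..r} x"
      by (simp only: distrib_right)
  qed
  finally show ?thesis using R by simp
qed

lemma gd_ind_finite: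
  assumes a: "a > 0"
  shows "(\<integral>\<^sup>+y. ennreal (gd a y) * indicator A y \<partial>lborel) \<noteq> \<top>"
proof -
  have "(\<integral>\<^sup>+y. ennreal (gd a y) * indicator A y \<partial>lborel) \<le> (\<integral>\<^sup>+y. ennreal (gd a y) \<partial>lborel)"
    by (rule nn_integral_mono) (auto simp: indicator_def)
  also have "\<dots> = 1" using gd_integral[OF a] .
  finally show ?thesis by (auto simp: top_unique)
qed

lemma (in prob_space) sq_std_normal_distributed:
  assumes Z: "distributed M lborel Z (\<lambda>x. ennreal (std_normal_density x))"
  shows "distributed M lborel (\<lambda>\<omega>. (Z \<omega>)\<^sup>2) (\<lambda>x. ennreal (gd (1/2) x))"
proof (rule distributedI_borel_atMost[where g = "\<lambda>a. enn2real (\<integral>\<^sup>+y. ennreal (gd (1/2) y) * indicator {..a} y \<partial>lborel)"])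
  have [measurable]: "Z \<in> borel_measurable M" using distributed_measurable[OF Z] by simp
  show "(\<lambda>\<omega>. (Z \<omega>)\<^sup>2) \<in> borel_measurable M" by measurable
  show "gd (1/2) \<in> borel_measurable borel" by measurable
  show "AE x in lborel. 0 \<le> gd (1/2) x" by (rule AE_I2) (rule gd_nonneg, simp)
  fix a :: real
  have "(\<integral>\<^sup>+x. ennreal (gd (1/2) x * indicator {..a} x) \<partial>lborel) = (\<integral>\<^sup>+x. ennreal (gd (1/2) x) * indicator {..a} x \<partial>lborel)"
    by (rule nn_integral_cong) (simp add: indicator_def)
  then show "(\<integral>\<^sup>+x. ennreal (gd (1/2) x * indicator {..a} x) \<partial>lborel) = ennreal (enn2real (\<integral>\<^sup>+y. ennreal (gd (1/2) y) * indicator {..a} y \<partial>lborel))"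
    using gd_ind_finite[of "1/2" "{..a}"] by (simp add: ennreal_enn2real_if)
  have "emeasure M {x \<in> space M. (Z x)\<^sup>2 \<le> a} = emeasure M (Z -` {x. x\<^sup>2 \<le> a} \<inter> space M)"
    by (rule arg_cong[where f = "emeasure M"]) auto
  also have "\<dots> = (\<integral>\<^sup>+x. ennreal (std_normal_density x) * indicator {x. x\<^sup>2 \<le> a} x \<partial>lborel)"
    by (rule distributed_emeasure[OF Z]) simp
  also have "\<dots> = (\<integral>\<^sup>+y. ennreal (gd (1/2) y) * indicator {..a} y \<partial>lborel)"
    by (rule sq_normal_cdf)
  finally show "emeasure M {x \<in> space M. (Z x)\<^sup>2 \<le> a} = ennreal (enn2real (\<integral>\<^sup>+y. ennreal (gd (1/2) y) * indicator {..a} y \<partial>lborel))"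
    using gd_ind_finite[of "1/2" "{..a}"] by (simp add: ennreal_enn2real_if)
qed

lemma (in prob_space) chi2_sum_distributed:
  assumes fin: "finite J" and ne: "J \<noteq> {}"
    and ind: "indep_vars (\<lambda>_. borel) z J"
    and norm: "\<And>i. i \<in> J \<Longrightarrow> distributed M lborel (z i) (\<lambda>x. ennreal (std_normal_density x))"
  shows "distributed M lborel (\<lambda>\<omega>. \<Sum>i\<in>J. (z i \<omega>)\<^sup>2) (\<lambda>x. ennreal (gd (real (card J) / 2) x))"
proof -
  define Y where "Y = (\<lambda>i \<omega>. (z i \<omega>)\<^sup>2)"
  have indY: "indep_vars (\<lambda>_. borel) Y J"
    unfolding Y_def using ind by (rule indep_vars_compose2[where Y = "\<lambda>_ x. x\<^sup>2"]) auto
  have dY: "\<And>i. i \<in> J \<Longrightarrow> distributed M lborel (Y i) (\<lambda>x. ennreal (gd (1/2) x))"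
    unfolding Y_def by (rule sq_std_normal_distributed[OF norm])
  have "distributed M lborel (\<lambda>\<omega>. \<Sum>i\<in>J. Y i \<omega>) (\<lambda>x. ennreal (gd (real (card J) / 2) x))"
    using fin ne indY dY
  proof (induct rule: finite_ne_induct)
    case (singleton i) then show ?case by auto
  next
    case (insert i I)
    have "distributed M lborel (\<lambda>\<omega>. Y i \<omega> + (\<Sum>i\<in>I. Y i \<omega>))
        (\<lambda>x. \<integral>\<^sup>+y. ennreal (gd (1/2) (x - y)) * ennreal (gd (real (card I) / 2) y) \<partial>lborel)"
      using insert
      by (intro distributed_convolution indep_vars_sum) (auto intro: indep_vars_subset)
    also have "(\<lambda>x. \<integral>\<^sup>+y. ennreal (gd (1/2) (x - y)) * ennreal (gd (real (card I) / 2) y) \<partial>lborel)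
        = (\<lambda>x. ennreal (gd (1/2 + real (card I) / 2) x))"
      using insert by (intro gd_conv) auto
    also have "1/2 + real (card I) / 2 = real (card (insert i I)) / 2"
      using insert by (simp add: field_simps)
    also have "(\<lambda>\<omega>. Y i \<omega> + (\<Sum>i\<in>I. Y i \<omega>)) = (\<lambda>\<omega>. \<Sum>i\<in>insert i I. Y i \<omega>)"
      using insert by auto
    finally show ?case .
  qed
  then show ?thesis by (simp add: Y_def)
qed

lemma (in prob_space) indep_pair_nn_integral:
  assumes ind: "indep_var lborel S lborel T"
    and dS: "distributed M lborel S f" and dT: "distributed M lborel T g"
    and H[measurable]: "H \<in> borel_measurable (lborel \<Otimes>\<^sub>M lborel)"
  shows "(\<integral>\<^sup>+\<omega>. H (S \<omega>, T \<omega>) \<partial>M) = (\<integral>\<^sup>+x. f x * (\<integral>\<^sup>+y. g y * H (x, y) \<partial>lborel) \<partial>lborel)"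
proof -
  have [measurable]: "f \<in> borel_measurable lborel" "g \<in> borel_measurable lborel"
    using distributed_borel_measurable[OF dS] distributed_borel_measurable[OF dT] by auto
  have J: "distributed M (lborel \<Otimes>\<^sub>M lborel) (\<lambda>\<omega>. (S \<omega>, T \<omega>)) (\<lambda>(x,y). f x * g y)"
    by (rule distributed_joint_indep[OF sigma_finite_lborel sigma_finite_lborel dS dT ind])
  have "(\<integral>\<^sup>+\<omega>. H (S \<omega>, T \<omega>) \<partial>M) = (\<integral>\<^sup>+p. (\<lambda>(x,y). f x * g y) p * H p \<partial>(lborel \<Otimes>\<^sub>M lborel))"
    by (rule distributed_nn_integral[OF J H, symmetric])
  also have "\<dots> = (\<integral>\<^sup>+x. \<integral>\<^sup>+y. f x * g y * H (x, y) \<partial>lborel \<partial>lborel)"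
    by (subst lborel.nn_integral_fst[symmetric]) (auto simp: case_prod_unfold)
  also have "\<dots> = (\<integral>\<^sup>+x. f x * (\<integral>\<^sup>+y. g y * H (x, y) \<partial>lborel) \<partial>lborel)"
    by (rule nn_integral_cong) (simp add: nn_integral_cmult[symmetric] mult.assoc)
  finally show ?thesis .
qed

lemma gd_bound:
  assumes a: "a > 0" and b: "b > 0" and s: "s > 0" and K: "K \<ge> 0"
    and h[measurable]: "h \<in> borel_measurable borel"
    and H: "\<And>x y. H (x, y) \<le> ennreal (K * exp ((1 - s) * (x + y) / 2)) * h (s * x)"
  shows "(\<integral>\<^sup>+x. ennreal (gd a x) * (\<integral>\<^sup>+y. ennreal (gd b y) * H (x, y) \<partial>lborel) \<partial>lborel)
       \<le> ennreal K * ennreal (s powr (-(a + b))) * (\<integral>\<^sup>+x. ennreal (gd a x) * h x \<partial>lborel)"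
proof -
  have inner: "(\<integral>\<^sup>+y. ennreal (exp ((1 - s) * y / 2) * gd b y) \<partial>lborel) = ennreal (s powr (-b))"
    using gd_scale[OF b s, of "\<lambda>_. 1"] gd_integral[OF b] by simp
  have "(\<integral>\<^sup>+x. ennreal (gd a x) * (\<integral>\<^sup>+y. ennreal (gd b y) * H (x, y) \<partial>lborel) \<partial>lborel)
     \<le> (\<integral>\<^sup>+x. ennreal (gd a x) * (\<integral>\<^sup>+y. ennreal (gd b y) * (ennreal (K * exp ((1 - s) * (x + y) / 2)) * h (s * x)) \<partial>lborel) \<partial>lborel)"
    by (intro nn_integral_mono mult_left_mono H) auto
  also have "\<dots> = (\<integral>\<^sup>+x. ennreal (gd a x) * (ennreal (K * exp ((1 - s) * x / 2)) * h (s * x) * (\<integral>\<^sup>+y. ennreal (exp ((1 - s) * y / 2) * gd b y) \<partial>lborel)) \<partial>lborel)"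
  proof (rule nn_integral_cong)
    fix x :: real
    have "(\<integral>\<^sup>+y. ennreal (gd b y) * (ennreal (K * exp ((1 - s) * (x + y) / 2)) * h (s * x)) \<partial>lborel)
        = (\<integral>\<^sup>+y. (ennreal (K * exp ((1 - s) * x / 2)) * h (s * x)) * ennreal (exp ((1 - s) * y / 2) * gd b y) \<partial>lborel)"
    proof (rule nn_integral_cong)
      fix y :: real
      have e: "exp ((1 - s) * (x + y) / 2) = exp ((1 - s) * x / 2) * exp ((1 - s) * y / 2)"
        by (simp add: exp_add[symmetric] field_simps)
      then show "ennreal (gd b y) * (ennreal (K * exp ((1 - s) * (x + y) / 2)) * h (s * x)) = (ennreal (K * exp ((1 - s) * x / 2)) * h (s * x)) * ennreal (exp ((1 - s) * y / 2) * gd b y)"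
        using K gd_nonneg[OF b, of y] by (subst e) (simp add: ennreal_mult mult_ac)
    qed
    also have "\<dots> = ennreal (K * exp ((1 - s) * x / 2)) * h (s * x) * (\<integral>\<^sup>+y. ennreal (exp ((1 - s) * y / 2) * gd b y) \<partial>lborel)"
      by (rule nn_integral_cmult) auto
    finally show "ennreal (gd a x) * (\<integral>\<^sup>+y. ennreal (gd b y) * (ennreal (K * exp ((1 - s) * (x + y) / 2)) * h (s * x)) \<partial>lborel)
       = ennreal (gd a x) * (ennreal (K * exp ((1 - s) * x / 2)) * h (s * x) * (\<integral>\<^sup>+y. ennreal (exp ((1 - s) * y / 2) * gd b y) \<partial>lborel))"
      by simp
  qed
  also have "\<dots> = (\<integral>\<^sup>+x. (ennreal K * ennreal (s powr (-b))) * (ennreal (exp ((1 - s) * x / 2) * gd a x) * h (s * x)) \<partial>lborel)"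
    unfolding inner
    by (rule nn_integral_cong) (use K gd_nonneg[OF a] in \<open>simp add: ennreal_mult mult_ac\<close>)
  also have "\<dots> = (ennreal K * ennreal (s powr (-b))) * (ennreal (s powr (-a)) * (\<integral>\<^sup>+x. ennreal (gd a x) * h x \<partial>lborel))"
    by (subst nn_integral_cmult) (auto simp: gd_scale[OF a s h])
  also have "\<dots> = ennreal K * ennreal (s powr (-(a + b))) * (\<integral>\<^sup>+x. ennreal (gd a x) * h x \<partial>lborel)"
  proof -
    have "ennreal (s powr (-b)) * ennreal (s powr (-a)) = ennreal (s powr (-(a + b)))"
      by (simp add: ennreal_mult[symmetric] powr_add[symmetric] add.commute)
    then show ?thesis by (metis mult.assoc)
  qed
  finally show ?thesis .
qed

lemma chi2_gd_ind:
  assumes "k > 0" and A[measurable]: "A \<in> sets borel"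
  shows "(\<integral>\<^sup>+x. ennreal (gd (real k / 2) x) * indicator A x \<partial>lborel) = ennreal (measure (chi2_distr k) A)"
proof -
  have a: "real k / 2 > 0" using assms by simp
  have "emeasure (chi2_distr k) A = (\<integral>\<^sup>+x. ennreal (gd (real k / 2) x) * indicator A x \<partial>lborel)"
    unfolding chi2_distr_def chi2_density_gd by (subst emeasure_density) auto
  then show ?thesis using gd_ind_finite[OF a, of A]
    by (simp add: measure_def ennreal_enn2real_if)
qed

lemma Q_meas:
  "{p::real \<times> real. P (fst p) (snd p)} \<in> sets (lborel \<Otimes>\<^sub>M lborel) \<longleftrightarrow> {p::real \<times> real. P (fst p) (snd p)} \<in> sets (borel \<Otimes>\<^sub>M borel)"
  by (simp add: sets_pair_measure_cong[OF sets_lborel sets_lborel])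

lemma Q1_meas: "{p::real \<times> real. c1 < fst p \<and> c2 < fst p + snd p} \<in> sets (lborel \<Otimes>\<^sub>M lborel)"
proof -
  have "{p \<in> space (lborel \<Otimes>\<^sub>M lborel). c1 < fst p \<and> c2 < fst p + snd p} \<in> sets (lborel \<Otimes>\<^sub>M lborel)"
    by measurable
  then show ?thesis by (simp add: space_pair_measure)
qed

lemma (in prob_space) key_bound:
  assumes ind: "indep_var lborel S lborel T"
    and dS: "distributed M lborel S (\<lambda>x. ennreal (gd a x))"
    and dT: "distributed M lborel T (\<lambda>x. ennreal (gd b x))"
    and a: "a > 0" and b: "b > 0" and Q[measurable]: "Q \<in> sets (lborel \<Otimes>\<^sub>M lborel)"
    and s: "s > 0" and K: "K \<ge> 0" and h[measurable]: "h \<in> borel_measurable borel"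
    and H: "\<And>x y. indicator Q (x, y) \<le> ennreal (K * exp ((1 - s) * (x + y) / 2)) * h (s * x)"
    and R: "(\<integral>\<^sup>+x. ennreal (gd a x) * h x \<partial>lborel) = ennreal R" and R0: "R \<ge> 0"
  shows "measure M {\<omega> \<in> space M. (S \<omega>, T \<omega>) \<in> Q} \<le> K * R / s powr (a + b)"
proof -
  have [measurable]: "S \<in> borel_measurable M" "T \<in> borel_measurable M"
    using distributed_measurable[OF dS] distributed_measurable[OF dT] by auto
  have E: "{\<omega> \<in> space M. (S \<omega>, T \<omega>) \<in> Q} = (\<lambda>\<omega>. (S \<omega>, T \<omega>)) -` Q \<inter> space M" by auto
  have Em: "(\<lambda>\<omega>. (S \<omega>, T \<omega>)) -` Q \<inter> space M \<in> sets M"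
    by (rule measurable_sets[OF _ Q]) simp
  have "emeasure M {\<omega> \<in> space M. (S \<omega>, T \<omega>) \<in> Q} = (\<integral>\<^sup>+\<omega>. indicator ((\<lambda>\<omega>. (S \<omega>, T \<omega>)) -` Q \<inter> space M) \<omega> \<partial>M)"
    unfolding E by (rule nn_integral_indicator[OF Em, symmetric])
  also have "\<dots> = (\<integral>\<^sup>+\<omega>. indicator Q (S \<omega>, T \<omega>) \<partial>M)"
    by (rule nn_integral_cong) (auto simp: indicator_def)
  also have "\<dots> = (\<integral>\<^sup>+x. ennreal (gd a x) * (\<integral>\<^sup>+y. ennreal (gd b y) * indicator Q (x, y) \<partial>lborel) \<partial>lborel)"
    by (rule indep_pair_nn_integral[OF ind dS dT]) measurable
  also have "\<dots> \<le> ennreal K * ennreal (s powr (-(a + b))) * (\<integral>\<^sup>+x. ennreal (gd a x) * h x \<partial>lborel)"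
    by (rule gd_bound[OF a b s K h H])
  also have "\<dots> = ennreal (K * R / s powr (a + b))"
  proof -
    have p: "s powr (-(a + b)) = 1 / s powr (a + b)" using powr_minus_divide[of s "a + b"] by simp
    show ?thesis unfolding R p using K R0 s by (simp add: ennreal_mult[symmetric])
  qed
  finally have "ennreal (measure M {\<omega> \<in> space M. (S \<omega>, T \<omega>) \<in> Q}) \<le> ennreal (K * R / s powr (a + b))"
    by (simp add: emeasure_eq_measure)
  moreover have "K * R / s powr (a + b) \<ge> 0" using K R0 s by simp
  ultimately show ?thesis by (simp add: ennreal_le_iff)
qed

lemma ind_le:
  assumes "p \<in> Q \<Longrightarrow> 1 \<le> t \<and> q \<in> U"
  shows "indicator Q p \<le> ennreal t * indicator U q"
  using assms by (cases "p \<in> Q") (auto simp: indicator_def)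

lemma Q2_meas: "{p::real \<times> real. c1 < fst p \<and> \<not> c2 < fst p + snd p} \<in> sets (lborel \<Otimes>\<^sub>M lborel)"
proof -
  have "{p \<in> space (lborel \<Otimes>\<^sub>M lborel). c1 < fst p \<and> \<not> c2 < fst p + snd p} \<in> sets (lborel \<Otimes>\<^sub>M lborel)"
    by measurable
  then show ?thesis by (simp add: space_pair_measure)
qed

lemma Q3_meas: "{p::real \<times> real. \<not> c1 < fst p \<and> c2 < fst p + snd p} \<in> sets (lborel \<Otimes>\<^sub>M lborel)"
proof -
  have "{p \<in> space (lborel \<Otimes>\<^sub>M lborel). \<not> c1 < fst p \<and> c2 < fst p + snd p} \<in> sets (lborel \<Otimes>\<^sub>M lborel)"
    by measurable
  then show ?thesis by (simp add: space_pair_measure)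
qed

theorem lemma1:
  fixes M :: "'a measure" and z :: "nat \<Rightarrow> 'a \<Rightarrow> real"
    and I1 I2 N1 N2 :: nat and r1 r2 :: real
  assumes "prob_space M"
    and "prob_space.indep_vars M (\<lambda>_. borel) z UNIV"
    and "\<And>i. distributed M lborel (z i) (\<lambda>x. ennreal (std_normal_density x))"
    and "I1 > 0" and "I2 > 0"
    and "N1 = I1" and "N2 = I1 + I2"
    and "r1 > 0" and "r2 > 0"
  shows
    "measure M {\<omega> \<in> space M. (\<Sum>j=1..N1. (z j \<omega>)\<^sup>2) > r1\<^sup>2 \<and> (\<Sum>j=1..N2. (z j \<omega>)\<^sup>2) > r2\<^sup>2}
       \<le> (INF u\<in>{0..<1/2}. exp (- u * r2\<^sup>2) * chi2_gt I1 ((1 - 2 * u) * r1\<^sup>2)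
                              / (1 - 2 * u) powr (real N2 / 2))
     \<and> measure M {\<omega> \<in> space M. (\<Sum>j=1..N1. (z j \<omega>)\<^sup>2) > r1\<^sup>2 \<and> (\<Sum>j=1..N2. (z j \<omega>)\<^sup>2) > r2\<^sup>2}
       \<ge> max (measure M {\<omega> \<in> space M. (\<Sum>j=1..N1. (z j \<omega>)\<^sup>2) > r1\<^sup>2}
                - (INF v\<in>{(0::real)..}. exp (v * r2\<^sup>2) * chi2_gt I1 ((1 + 2 * v) * r1\<^sup>2)
                                  / (1 + 2 * v) powr (real N2 / 2)))
               (measure M {\<omega> \<in> space M. (\<Sum>j=1..N2. (z j \<omega>)\<^sup>2) > r2\<^sup>2}
                - (INF v\<in>{0..<1/2}. exp (- v * r2\<^sup>2) * chi2_le I1 ((1 - 2 * v) * r1\<^sup>2)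
                                  / (1 - 2 * v) powr (real N2 / 2)))"
proof -
  interpret prob_space M by fact
  note ind = assms(2) and norm = assms(3)
  have zm[measurable]: "\<And>i. z i \<in> borel_measurable M"
    using distributed_measurable[OF norm] by simp
  define A where "A = {1..I1}"
  define B where "B = {I1 + 1..N2}"
  define S where "S = (\<lambda>\<omega>. \<Sum>i\<in>A. (z i \<omega>)\<^sup>2)"
  define T where "T = (\<lambda>\<omega>. \<Sum>i\<in>B. (z i \<omega>)\<^sup>2)"
  define a where "a = real I1 / 2"
  define b where "b = real I2 / 2"
  have a: "a > 0" and b: "b > 0" using assms(4,5) by (auto simp: a_def b_def)
  have ab: "a + b = real N2 / 2" using assms(7) by (simp add: a_def b_def field_simps)
  have cardA: "card A = I1" and cardB: "card B = I2" using assms(7) by (auto simp: A_def B_def)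
  have dS: "distributed M lborel S (\<lambda>x. ennreal (gd a x))"
    unfolding S_def a_def cardA[symmetric]
    by (rule chi2_sum_distributed) (use assms(4) norm in \<open>auto simp: A_def intro: indep_vars_subset[OF ind]\<close>)
  have dT: "distributed M lborel T (\<lambda>x. ennreal (gd b x))"
    unfolding T_def b_def cardB[symmetric]
    by (rule chi2_sum_distributed) (use assms(5,7) norm in \<open>auto simp: B_def intro: indep_vars_subset[OF ind]\<close>)
  have indST: "indep_var lborel S lborel T"
  proof -
    have "indep_var lborel ((\<lambda>f. \<Sum>i\<in>A. (f i)\<^sup>2) \<circ> (\<lambda>\<omega>. restrict (\<lambda>i. z i \<omega>) A))
                    lborel ((\<lambda>f. \<Sum>i\<in>B. (f i)\<^sup>2) \<circ> (\<lambda>\<omega>. restrict (\<lambda>i. z i \<omega>) B))"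
      by (intro indep_var_compose[OF indep_var_restrict[OF ind]]) (auto simp: A_def B_def)
    also have "(\<lambda>f. \<Sum>i\<in>A. (f i)\<^sup>2) \<circ> (\<lambda>\<omega>. restrict (\<lambda>i. z i \<omega>) A) = S"
      by (auto simp: S_def fun_eq_iff intro!: sum.cong)
    also have "(\<lambda>f. \<Sum>i\<in>B. (f i)\<^sup>2) \<circ> (\<lambda>\<omega>. restrict (\<lambda>i. z i \<omega>) B) = T"
      by (auto simp: T_def fun_eq_iff intro!: sum.cong)
    finally show ?thesis .
  qed
  have sum1: "\<And>\<omega>. (\<Sum>j=1..N1. (z j \<omega>)\<^sup>2) = S \<omega>" using assms(6) by (simp add: S_def A_def)
  have sum2: "\<And>\<omega>. (\<Sum>j=1..N2. (z j \<omega>)\<^sup>2) = S \<omega> + T \<omega>"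
  proof -
    fix \<omega>
    have "{1..N2} = A \<union> B" using assms(7) by (auto simp: A_def B_def)
    then show "(\<Sum>j=1..N2. (z j \<omega>)\<^sup>2) = S \<omega> + T \<omega>"
      by (simp add: S_def T_def sum.union_disjoint A_def B_def)
  qed
  have Sm[measurable]: "S \<in> borel_measurable M" unfolding S_def by measurable
  have Tm[measurable]: "T \<in> borel_measurable M" unfolding T_def by measurable
  define c1 where "c1 = r1\<^sup>2"
  define c2 where "c2 = r2\<^sup>2"
  define Q1 where "Q1 = {p::real \<times> real. c1 < fst p \<and> c2 < fst p + snd p}"
  define Q2 where "Q2 = {p::real \<times> real. c1 < fst p \<and> \<not> c2 < fst p + snd p}"
  define Q3 where "Q3 = {p::real \<times> real. \<not> c1 < fst p \<and> c2 < fst p + snd p}"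
  define E where "E = {\<omega> \<in> space M. c1 < S \<omega> \<and> c2 < S \<omega> + T \<omega>}"
  define Z1 where "Z1 = {\<omega> \<in> space M. c1 < S \<omega>}"
  define Z2 where "Z2 = {\<omega> \<in> space M. c2 < S \<omega> + T \<omega>}"
  have Em[measurable]: "E \<in> sets M" unfolding E_def by measurable
  have Z1m[measurable]: "Z1 \<in> sets M" unfolding Z1_def by measurable
  have Z2m[measurable]: "Z2 \<in> sets M" unfolding Z2_def by measurable
  have E1: "E = {\<omega> \<in> space M. (S \<omega>, T \<omega>) \<in> Q1}" by (auto simp: E_def Q1_def)
  have E2: "Z1 - E = {\<omega> \<in> space M. (S \<omega>, T \<omega>) \<in> Q2}" by (auto simp: E_def Z1_def Q2_def)
  have E3: "Z2 - E = {\<omega> \<in> space M. (S \<omega>, T \<omega>) \<in> Q3}" by (auto simp: E_def Z2_def Q3_def)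
  have D1: "measure M Z1 - measure M E = measure M (Z1 - E)"
    by (rule finite_measure_Diff[symmetric]) (auto simp: E_def Z1_def)
  have D2: "measure M Z2 - measure M E = measure M (Z2 - E)"
    by (rule finite_measure_Diff[symmetric]) (auto simp: E_def Z2_def)
  have c1: "c1 > 0" using assms(8) by (simp add: c1_def)

  have up: "measure M E \<le> exp (- u * c2) * chi2_gt I1 ((1 - 2 * u) * c1) / (1 - 2 * u) powr (real N2 / 2)"
    if u: "u \<in> {0..<1/2}" for u
  proof -
    define s where "s = 1 - 2 * u"
    have s: "s > 0" using u by (simp add: s_def)
    have "measure M {\<omega> \<in> space M. (S \<omega>, T \<omega>) \<in> Q1} \<le> exp (- u * c2) * chi2_gt I1 (s * c1) / s powr (a + b)"
    proof (rule key_bound[OF indST dS dT a b _ s])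
      show "Q1 \<in> sets (lborel \<Otimes>\<^sub>M lborel)" unfolding Q1_def by (rule Q1_meas)
      show "exp (- u * c2) \<ge> 0" by simp
      show "chi2_gt I1 (s * c1) \<ge> 0" by (simp add: chi2_gt_def)
      show "indicator {s * c1<..} \<in> borel_measurable borel" by measurable
      show "(\<integral>\<^sup>+x. ennreal (gd a x) * indicator {s * c1<..} x \<partial>lborel) = ennreal (chi2_gt I1 (s * c1))"
        unfolding a_def chi2_gt_def by (rule chi2_gd_ind) (use assms(4) in auto)
      fix x y :: real
      show "indicator Q1 (x, y) \<le> ennreal (exp (- u * c2) * exp ((1 - s) * (x + y) / 2)) * indicator {s * c1<..} (s * x)"
      proof (rule ind_le)
        assume "(x, y) \<in> Q1"
        then have xy: "c1 < x" "c2 < x + y" by (auto simp: Q1_def)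
        have "exp (- u * c2) * exp ((1 - s) * (x + y) / 2) = exp (u * (x + y - c2))"
          by (simp add: s_def exp_add[symmetric] algebra_simps)
        moreover have "0 \<le> u * (x + y - c2)" using u xy by auto
        ultimately have "1 \<le> exp (- u * c2) * exp ((1 - s) * (x + y) / 2)" by simp
        moreover have "s * x \<in> {s * c1<..}" using s xy by simp
        ultimately show "1 \<le> exp (- u * c2) * exp ((1 - s) * (x + y) / 2) \<and> s * x \<in> {s * c1<..}" by simp
      qed
    qed
    then show ?thesis unfolding E1 s_def ab .
  qed

  have lo1: "measure M (Z1 - E) \<le> exp (v * c2) * chi2_gt I1 ((1 + 2 * v) * c1) / (1 + 2 * v) powr (real N2 / 2)"
    if v: "v \<in> {0..}" for v :: real
  proof -
    define s where "s = 1 + 2 * v"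
    have s: "s > 0" using v by (simp add: s_def)
    have "measure M {\<omega> \<in> space M. (S \<omega>, T \<omega>) \<in> Q2} \<le> exp (v * c2) * chi2_gt I1 (s * c1) / s powr (a + b)"
    proof (rule key_bound[OF indST dS dT a b _ s])
      show "Q2 \<in> sets (lborel \<Otimes>\<^sub>M lborel)" unfolding Q2_def by (rule Q2_meas)
      show "exp (v * c2) \<ge> 0" by simp
      show "chi2_gt I1 (s * c1) \<ge> 0" by (simp add: chi2_gt_def)
      show "indicator {s * c1<..} \<in> borel_measurable borel" by measurable
      show "(\<integral>\<^sup>+x. ennreal (gd a x) * indicator {s * c1<..} x \<partial>lborel) = ennreal (chi2_gt I1 (s * c1))"
        unfolding a_def chi2_gt_def by (rule chi2_gd_ind) (use assms(4) in auto)
      fix x y :: real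
      show "indicator Q2 (x, y) \<le> ennreal (exp (v * c2) * exp ((1 - s) * (x + y) / 2)) * indicator {s * c1<..} (s * x)"
      proof (rule ind_le)
        assume "(x, y) \<in> Q2"
        then have xy: "c1 < x" "x + y \<le> c2" by (auto simp: Q2_def)
        have "v * c2 + (1 - s) * (x + y) / 2 = v * (c2 - (x + y))" by (simp add: s_def field_simps)
        then have "exp (v * c2) * exp ((1 - s) * (x + y) / 2) = exp (v * (c2 - (x + y)))"
          by (simp add: exp_add[symmetric])
        moreover have "0 \<le> v * (c2 - (x + y))" using v xy by auto
        ultimately have "1 \<le> exp (v * c2) * exp ((1 - s) * (x + y) / 2)" by simp
        moreover have "s * x \<in> {s * c1<..}" using s xy by simp
        ultimately show "1 \<le> exp (v * c2) * exp ((1 - s) * (x + y) / 2) \<and> s * x \<in> {s * c1<..}" by simp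
      qed
    qed
    then show ?thesis unfolding E2 s_def ab .
  qed

  have lo2: "measure M (Z2 - E) \<le> exp (- v * c2) * chi2_le I1 ((1 - 2 * v) * c1) / (1 - 2 * v) powr (real N2 / 2)"
    if v: "v \<in> {0..<1/2}" for v :: real
  proof -
    define s where "s = 1 - 2 * v"
    have s: "s > 0" using v by (simp add: s_def)
    have "measure M {\<omega> \<in> space M. (S \<omega>, T \<omega>) \<in> Q3} \<le> exp (- v * c2) * chi2_le I1 (s * c1) / s powr (a + b)"
    proof (rule key_bound[OF indST dS dT a b _ s])
      show "Q3 \<in> sets (lborel \<Otimes>\<^sub>M lborel)" unfolding Q3_def by (rule Q3_meas)
      show "exp (- v * c2) \<ge> 0" by simp
      show "chi2_le I1 (s * c1) \<ge> 0" by (simp add: chi2_le_def)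
      show "indicator {..s * c1} \<in> borel_measurable borel" by measurable
      show "(\<integral>\<^sup>+x. ennreal (gd a x) * indicator {..s * c1} x \<partial>lborel) = ennreal (chi2_le I1 (s * c1))"
        unfolding a_def chi2_le_def by (rule chi2_gd_ind) (use assms(4) in auto)
      fix x y :: real
      show "indicator Q3 (x, y) \<le> ennreal (exp (- v * c2) * exp ((1 - s) * (x + y) / 2)) * indicator {..s * c1} (s * x)"
      proof (rule ind_le)
        assume "(x, y) \<in> Q3"
        then have xy: "x \<le> c1" "c2 < x + y" by (auto simp: Q3_def)
        have "exp (- v * c2) * exp ((1 - s) * (x + y) / 2) = exp (v * (x + y - c2))"
          by (simp add: s_def exp_add[symmetric] algebra_simps)
        moreover have "0 \<le> v * (x + y - c2)" using v xy by auto
        ultimately have "1 \<le> exp (- v * c2) * exp ((1 - s) * (x + y) / 2)" by simp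
        moreover have "s * x \<in> {..s * c1}" using s xy by simp
        ultimately show "1 \<le> exp (- v * c2) * exp ((1 - s) * (x + y) / 2) \<and> s * x \<in> {..s * c1}" by simp
      qed
    qed
    then show ?thesis unfolding E3 s_def ab .
  qed

  have G1: "measure M E \<le> (INF u\<in>{0..<1/2}. exp (- u * c2) * chi2_gt I1 ((1 - 2 * u) * c1) / (1 - 2 * u) powr (real N2 / 2))"
    by (rule cINF_greatest, simp) (erule up)
  have G2: "measure M Z1 - (INF v\<in>{(0::real)..}. exp (v * c2) * chi2_gt I1 ((1 + 2 * v) * c1) / (1 + 2 * v) powr (real N2 / 2)) \<le> measure M E"
  proof -
    have "measure M Z1 - measure M E \<le> (INF v\<in>{(0::real)..}. exp (v * c2) * chi2_gt I1 ((1 + 2 * v) * c1) / (1 + 2 * v) powr (real N2 / 2))"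
      unfolding D1 by (rule cINF_greatest, simp) (erule lo1)
    then show ?thesis by linarith
  qed
  have G3: "measure M Z2 - (INF v\<in>{0..<1/2}. exp (- v * c2) * chi2_le I1 ((1 - 2 * v) * c1) / (1 - 2 * v) powr (real N2 / 2)) \<le> measure M E"
  proof -
    have "measure M Z2 - measure M E \<le> (INF v\<in>{0..<1/2}. exp (- v * c2) * chi2_le I1 ((1 - 2 * v) * c1) / (1 - 2 * v) powr (real N2 / 2))"
      unfolding D2 by (rule cINF_greatest, simp) (erule lo2)
    then show ?thesis by linarith
  qed
  show ?thesis
    unfolding sum1 sum2 using G1 G2 G3 by (simp add: E_def Z1_def Z2_def c1_def c2_def)
qed

end
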